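(* There is an absolute constant $c>0$ such that for every odd $n$, every mapping $\phi\colon\{0,1\}^n\to\{0,1\}^n$ from ${\sf XOR}$ to ${\sf Majority}$ satisfies ${\sf avgStretch}(\phi)\ge c\sqrt{n}$. On the other hand, there is an absolute constant $C$ such that for every odd $n$ there exists a $C$-Lipschitz mapping $\psi\colon\{0,1\}^n\to\{0,1\}^n$ from ${\sf Majority}$ to ${\sf XOR}$.
   Context: ${\sf XOR}(x)=\sum_i x_i \bmod 2$; ${\sf Majority}(x)=1$ iff $\sum_i x_i>n/2$. A mapping from $f$ to $g$ is a bijection $\psi$ of $\{0,1\}^n$ with $f(z)=g(\psi(z))$ for all $z$. ${\sf avgStretch}(\phi)=\mathbb{E}_{x,i}[{\sf dist}(\phi(x),\phi(x+e_i))]$ with $x$ uniform in $\{0,1\}^n$, $i$ uniform in $[n]$, $e_i$ the $i$-th unit vector, addition mod 2, ${\sf dist}$ Hamming distance. $C$-Lipschitz: ${\sf dist}(\psi(x),\psi(y))\le C\,{\sf dist}(x,y)$ for all $x,y$. *)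

theory Defs
  imports "HOL-Analysis.Analysis"
begin

text \<open>The Boolean cube {0,1}^n, points represented as bool lists of length n
  (True = 1).\<close>
definition cube :: "nat \<Rightarrow> bool list set" where
  "cube n = {x. length x = n}"

definition weight :: "bool list \<Rightarrow> nat" where
  "weight x = length (filter id x)"

definition XOR :: "bool list \<Rightarrow> bool" where
  "XOR x = odd (weight x)"

definition Majority :: "bool list \<Rightarrow> bool" where
  "Majority x = (2 * weight x > length x)"

definition hdist :: "bool list \<Rightarrow> bool list \<Rightarrow> nat" where
  "hdist x y = card {i. i < length x \<and> x ! i \<noteq> y ! i}"

definition flip :: "nat \<Rightarrow> bool list \<Rightarrow> bool list" where
  "flip i x = x[i := \<not> x ! i]"

definition is_mapping :: "nat \<Rightarrow> (bool list \<Rightarrow> bool) \<Rightarrow> (bool list \<Rightarrow> bool)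
    \<Rightarrow> (bool list \<Rightarrow> bool list) \<Rightarrow> bool" where
  "is_mapping n f g psi \<longleftrightarrow> bij_betw psi (cube n) (cube n) \<and>
     (\<forall>z \<in> cube n. f z = g (psi z))"

definition avgStretch :: "nat \<Rightarrow> (bool list \<Rightarrow> bool list) \<Rightarrow> real" where
  "avgStretch n phi = (\<Sum>x\<in>cube n. \<Sum>i<n. real (hdist (phi x) (phi (flip i x))))
      / (2 ^ n * real n)"

definition lipschitz_on_cube :: "nat \<Rightarrow> real \<Rightarrow> (bool list \<Rightarrow> bool list) \<Rightarrow> bool" where
  "lipschitz_on_cube n C psi \<longleftrightarrow>
     (\<forall>x\<in>cube n. \<forall>y\<in>cube n. real (hdist (psi x) (psi y)) \<le> C * real (hdist x y))"

end

theory Submission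
  imports Defs
begin


lemma finite_cube: "finite (cube n)"
  unfolding cube_def using finite_lists_length_eq[of "UNIV::bool set" n] by simp

lemma cube_Suc: "cube (Suc n) = Cons True ` cube n \<union> Cons False ` cube n"
proof
  show "cube (Suc n) \<subseteq> Cons True ` cube n \<union> Cons False ` cube n"
  proof
    fix x assume "x \<in> cube (Suc n)"
    then obtain a y where "x = a # y" "length y = n" by (cases x) (auto simp: cube_def)
    then show "x \<in> Cons True ` cube n \<union> Cons False ` cube n" by (cases a) (auto simp: cube_def)
  qed
qed (auto simp: cube_def)

lemma sum_cube_Suc: "sum f (cube (Suc n)) = (\<Sum>y\<in>cube n. f (True#y) + f (False#y))"
proof -
  have "sum f (cube (Suc n)) = sum f (Cons True ` cube n) + sum f (Cons False ` cube n)"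
    unfolding cube_Suc by (rule sum.union_disjoint) (auto simp: finite_cube)
  also have "\<dots> = (\<Sum>y\<in>cube n. f (True#y)) + (\<Sum>y\<in>cube n. f (False#y))"
    by (simp add: sum.reindex)
  finally show ?thesis by (simp add: sum.distrib)
qed

definition Yv :: "bool list \<Rightarrow> real" where
  "Yv y = 2 * real (weight y) - real (length y)"

lemma Yv_T: "Yv (True#y) = Yv y + 1" and Yv_F: "Yv (False#y) = Yv y - 1"
  by (auto simp: Yv_def weight_def)

lemma S0': "real (card (cube n)) = 2 ^ n"
proof -
  have "cube n = {xs. set xs \<subseteq> (UNIV::bool set) \<and> length xs = n}" by (simp add: cube_def)
  then have "card (cube n) = 2 ^ n" using card_lists_length_eq[of "UNIV::bool set" n] by simp
  then show ?thesis by simp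
qed

lemma S2: "(\<Sum>y\<in>cube n. (Yv y)^2) = real n * 2 ^ n"
proof (induction n)
  case 0 then show ?case by (simp add: cube_def Yv_def weight_def)
next
  case (Suc n)
  have "(\<Sum>y\<in>cube (Suc n). (Yv y)^2) = (\<Sum>y\<in>cube n. 2 * (Yv y)^2 + 2)"
    unfolding sum_cube_Suc Yv_T Yv_F by (rule sum.cong) (auto simp: power2_eq_square algebra_simps)
  also have "\<dots> = 2 * (\<Sum>y\<in>cube n. (Yv y)^2) + 2 * 2^n"
    using S0'[of n] by (simp add: sum.distrib sum_distrib_left)
  finally show ?case using Suc by (simp add: algebra_simps)
qed

lemma S4: "(\<Sum>y\<in>cube n. (Yv y)^4) = (3 * real n ^ 2 - 2 * real n) * 2 ^ n"
proof (induction n)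
  case 0 then show ?case by (simp add: cube_def Yv_def weight_def)
next
  case (Suc n)
  have "(\<Sum>y\<in>cube (Suc n). (Yv y)^4) = (\<Sum>y\<in>cube n. 2 * (Yv y)^4 + 12 * (Yv y)^2 + 2)"
    unfolding sum_cube_Suc Yv_T Yv_F by (rule sum.cong) (auto simp: power2_eq_square power4_eq_xxxx algebra_simps)
  also have "\<dots> = 2 * (\<Sum>y\<in>cube n. (Yv y)^4) + 12 * (\<Sum>y\<in>cube n. (Yv y)^2) + 2 * 2^n"
    using S0'[of n] by (simp add: sum.distrib sum_distrib_left)
  finally show ?case using Suc S2[of n] by (simp add: algebra_simps power2_eq_square)
qed

lemma pointwise: fixes Y T :: real assumes T: "T > 0" shows "Y^2 \<le> T * \<bar>Y\<bar> + Y^4 / T^2"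
proof (cases "\<bar>Y\<bar> \<le> T")
  case True
  have "\<bar>Y\<bar> * \<bar>Y\<bar> \<le> T * \<bar>Y\<bar>" by (rule mult_right_mono[OF True abs_ge_zero])
  then have "Y^2 \<le> T * \<bar>Y\<bar>" by (simp add: power2_eq_square)
  moreover have "Y^4 / T^2 \<ge> 0" by simp
  ultimately show ?thesis by linarith
next
  case False
  then have "\<bar>T\<bar> \<le> \<bar>Y\<bar>" using T by simp
  then have "T^2 \<le> Y^2" by (simp only: abs_le_square_iff)
  then have h: "T^2 * Y^2 \<le> Y^2 * Y^2" by (rule mult_right_mono) simp
  have e: "Y^2 * Y^2 = Y^4" by (metis numeral_Bit0 power_add)
  have "Y^2 * T^2 \<le> Y^4" using h unfolding e by (simp only: mult.commute)
  then have "Y^2 \<le> Y^4 / T^2" using T by (simp only: pos_le_divide_eq zero_less_power)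
  moreover have "T * \<bar>Y\<bar> \<ge> 0" using T by simp
  ultimately show ?thesis by linarith
qed

lemma absY: assumes n: "n \<ge> 1" shows "(\<Sum>y\<in>cube n. \<bar>Yv y\<bar>) \<ge> sqrt (real n) * 2^n / 8"
proof -
  define T where "T = 2 * sqrt (real n)"
  define A where "A = (\<Sum>y\<in>cube n. \<bar>Yv y\<bar>)"
  have T0: "T > 0" using n by (simp add: T_def)
  have T2: "T^2 = 4 * real n" by (simp add: T_def power_mult_distrib)
  have "real n * 2^n = (\<Sum>y\<in>cube n. (Yv y)^2)" by (simp add: S2)
  also have "\<dots> \<le> (\<Sum>y\<in>cube n. T * \<bar>Yv y\<bar> + (Yv y)^4 / T^2)"
    by (rule sum_mono) (rule pointwise[OF T0])
  also have "\<dots> = T * A + (3 * real n ^ 2 - 2 * real n) * 2 ^ n / T^2"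
    by (simp add: A_def sum.distrib sum_distrib_left sum_divide_distrib[symmetric] S4)
  also have "(3 * real n ^ 2 - 2 * real n) * 2 ^ n / T^2 \<le> 3 * real n * 2^n / 4"
  proof -
    have "(3 * real n ^ 2 - 2 * real n) * 2 ^ n / T^2 = (3 * real n - 2) * 2 ^ n / 4"
      using n unfolding T2 by (simp add: power2_eq_square divide_simps) (simp add: algebra_simps)
    also have "\<dots> \<le> 3 * real n * 2^n / 4" by simp
    finally show ?thesis .
  qed
  finally have "real n * 2^n / 4 \<le> T * A" by simp
  then have "real n * 2^n / 4 \<le> 2 * sqrt (real n) * A" by (simp add: T_def)
  moreover have sp: "sqrt (real n) > 0" using n by simp
  moreover have e: "sqrt (real n) * 2^n / 8 = (real n * 2^n / 4) / (2 * sqrt (real n))"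
    using sp by (simp add: field_simps)
  ultimately have "sqrt (real n) * 2^n / 8 \<le> A"
    by (simp only: e pos_divide_le_eq mult_pos_pos) (simp add: algebra_simps)
  then show ?thesis by (simp add: A_def)
qed

lemma flip_len: "length (flip i x) = length x" by (simp add: flip_def)

lemma flip_weight: "i < length x \<Longrightarrow>
  weight (flip i x) + (if x!i then 1 else 0) = weight x + (if x!i then 0 else 1)"
proof (induction x arbitrary: i)
  case (Cons a x)
  show ?case
  proof (cases i)
    case 0 then show ?thesis by (simp add: flip_def weight_def)
  next
    case (Suc j)
    then have "j < length x" using Cons by simp
    then have "weight (flip j x) + (if x!j then 1 else 0) = weight x + (if x!j then 0 else 1)"
      by (rule Cons.IH)
    moreover have "flip i (a#x) = a # flip j x" using Suc by (simp add: flip_def)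
    ultimately show ?thesis using Suc by (cases a; cases "x!j") (simp_all add: weight_def)
  qed
qed simp

lemma flip_XOR: "i < length x \<Longrightarrow> XOR (flip i x) = (\<not> XOR x)"
proof -
  assume i: "i < length x"
  have "weight x = Suc (weight (flip i x)) \<or> weight (flip i x) = Suc (weight x)"
    using flip_weight[OF i] by (cases "x!i") auto
  then show ?thesis unfolding XOR_def by auto
qed

lemma hdist_Cons: "hdist (a#as) (b#bs) = hdist as bs + (if a \<noteq> b then 1 else 0)"
proof -
  have eq: "{i. i < length (a#as) \<and> (a#as)!i \<noteq> (b#bs)!i} =
     (if a \<noteq> b then insert 0 else id) (Suc ` {i. i < length as \<and> as!i \<noteq> bs!i})"
  proof (rule set_eqI)
    fix i show "i \<in> {i. i < length (a#as) \<and> (a#as)!i \<noteq> (b#bs)!i} \<longleftrightarrow>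
       i \<in> (if a \<noteq> b then insert 0 else id) (Suc ` {i. i < length as \<and> as!i \<noteq> bs!i})"
      by (cases i) auto
  qed
  have f: "finite (Suc ` {i. i < length as \<and> as!i \<noteq> bs!i})" by simp
  have c: "card (Suc ` {i. i < length as \<and> as!i \<noteq> bs!i}) = hdist as bs"
    unfolding hdist_def by (rule card_image) simp
  show ?thesis unfolding hdist_def[of "a#as"] eq using f c
    by (auto simp: card_insert_if)
qed

lemma hdist_weight: "length a = length b \<Longrightarrow>
   \<bar>real (weight a) - real (weight b)\<bar> \<le> real (hdist a b)"
proof (induction a b rule: list_induct2)
  case Nil then show ?case by (simp add: weight_def hdist_def)
next
  case (Cons x xs y ys)
  then show ?case by (auto simp: hdist_Cons weight_def)
qed

lemma hdist_maj: assumes "length a = n" "length b = n" "Majority a \<noteq> Majority b"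
  shows "\<bar>Yv a\<bar> / 2 \<le> real (hdist a b)"
proof -
  have h: "\<bar>real (weight a) - real (weight b)\<bar> \<le> real (hdist a b)"
    using hdist_weight assms by simp
  from assms(3) have "(2 * weight a > n \<and> \<not> 2 * weight b > n) \<or> (\<not> 2 * weight a > n \<and> 2 * weight b > n)"
    using assms unfolding Majority_def by auto
  then have "\<bar>2 * real (weight a) - real n\<bar> \<le> 2 * \<bar>real (weight a) - real (weight b)\<bar>"
  proof (elim disjE conjE)
    assume c1: "n < 2 * weight a" and c2: "\<not> n < 2 * weight b"
    have "real n < real (2 * weight a)" using c1 of_nat_less_iff by blast
    moreover have "\<not> real n < real (2 * weight b)" using c2 of_nat_less_iff by blast
    ultimately show ?thesis by simp
  next
    assume c1: "\<not> n < 2 * weight a" and c2: "n < 2 * weight b"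
    have "\<not> real n < real (2 * weight a)" using c1 of_nat_less_iff by blast
    moreover have "real n < real (2 * weight b)" using c2 of_nat_less_iff by blast
    ultimately show ?thesis by simp
  qed
  then show ?thesis using h assms unfolding Yv_def by simp
qed

lemma part1: "\<exists>c::real. c > 0 \<and> (\<forall>n phi. odd n \<longrightarrow> is_mapping n XOR Majority phi \<longrightarrow>
            avgStretch n phi \<ge> c * sqrt (real n))"
proof (rule exI[of _ "1/16"], intro conjI allI impI)
  fix n phi assume o: "odd n" and m: "is_mapping n XOR Majority phi"
  have n: "n \<ge> 1" using o by (cases n) auto
  have bij: "bij_betw phi (cube n) (cube n)" and f: "\<forall>z\<in>cube n. XOR z = Majority (phi z)"
    using m by (auto simp: is_mapping_def)
  have len: "\<And>x. x \<in> cube n \<Longrightarrow> length (phi x) = n"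
    using bij_betwE[OF bij] by (auto simp: cube_def)
  have pt: "\<And>x i. x \<in> cube n \<Longrightarrow> i < n \<Longrightarrow> \<bar>Yv (phi x)\<bar> / 2 \<le> real (hdist (phi x) (phi (flip i x)))"
  proof -
    fix x i assume x: "x \<in> cube n" and i: "i < n"
    have fx: "flip i x \<in> cube n" using x by (simp add: cube_def flip_len)
    have "XOR (flip i x) = (\<not> XOR x)" using x i by (intro flip_XOR) (simp add: cube_def)
    then have "Majority (phi x) \<noteq> Majority (phi (flip i x))" using f x fx by auto
    then show "\<bar>Yv (phi x)\<bar> / 2 \<le> real (hdist (phi x) (phi (flip i x)))"
      using len[OF x] len[OF fx] by (intro hdist_maj) auto
  qed
  have "(\<Sum>x\<in>cube n. real n * (\<bar>Yv (phi x)\<bar> / 2)) \<le>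
        (\<Sum>x\<in>cube n. \<Sum>i<n. real (hdist (phi x) (phi (flip i x))))"
  proof (rule sum_mono)
    fix x assume x: "x \<in> cube n"
    have "(\<Sum>i<n. \<bar>Yv (phi x)\<bar> / 2) \<le> (\<Sum>i<n. real (hdist (phi x) (phi (flip i x))))"
      by (rule sum_mono) (use pt x in auto)
    then show "real n * (\<bar>Yv (phi x)\<bar> / 2) \<le> (\<Sum>i<n. real (hdist (phi x) (phi (flip i x))))"
      by simp
  qed
  moreover have "(\<Sum>x\<in>cube n. real n * (\<bar>Yv (phi x)\<bar> / 2)) = real n / 2 * (\<Sum>y\<in>cube n. \<bar>Yv y\<bar>)"
  proof -
    have "(\<Sum>x\<in>cube n. real n * (\<bar>Yv (phi x)\<bar> / 2)) = real n / 2 * (\<Sum>x\<in>cube n. \<bar>Yv (phi x)\<bar>)"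
      by (subst sum_distrib_left) (rule sum.cong, auto)
    also have "(\<Sum>x\<in>cube n. \<bar>Yv (phi x)\<bar>) = (\<Sum>y\<in>cube n. \<bar>Yv y\<bar>)"
      by (rule sum.reindex_bij_betw[OF bij])
    finally show ?thesis .
  qed
  ultimately have A: "real n / 2 * (sqrt (real n) * 2^n / 8) \<le>
        (\<Sum>x\<in>cube n. \<Sum>i<n. real (hdist (phi x) (phi (flip i x))))"
    using absY[OF n] n by (smt (verit) mult_left_mono of_nat_0_le_iff divide_nonneg_nonneg zero_le_numeral)
  have pos: "(2::real) ^ n * real n > 0" using n by simp
  have "1/16 * sqrt (real n) = (real n / 2 * (sqrt (real n) * 2^n / 8)) / (2 ^ n * real n)"
    using pos by (simp add: field_simps)
  also have "\<dots> \<le> avgStretch n phi" unfolding avgStretch_def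
    by (rule divide_right_mono[OF A]) (use pos in simp)
  finally show "1/16 * sqrt (real n) \<le> avgStretch n phi" .
qed simp

definition psi :: "nat \<Rightarrow> bool list \<Rightarrow> bool list" where
  "psi n z = map (\<lambda>i. z!i \<noteq> z!Suc i) [0..<n-1] @ [Majority z \<noteq> (z!0 \<noteq> z!(n-1))]"

lemma weight_snoc: "weight (xs @ [b]) = weight xs + (if b then 1 else 0)"
  by (simp add: weight_def)

lemma tele: fixes z :: "bool list" shows "odd (weight (map (\<lambda>i. z!i \<noteq> z!Suc i) [0..<k])) = (z!0 \<noteq> z!k)"
proof (induction k)
  case (Suc k)
  have h: "weight (map (\<lambda>i. z!i \<noteq> z!Suc i) [0..<Suc k]) = weight (map (\<lambda>i. z!i \<noteq> z!Suc i) [0..<k]) + (if z!k \<noteq> z!Suc k then 1 else 0)"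
    by (simp add: weight_snoc)
  show ?case
  proof (cases "z!k = z!Suc k")
    case True then show ?thesis using Suc.IH h by simp
  next
    case False
    then have e: "z!Suc k = (\<not> z!k)" by auto
    show ?thesis using Suc.IH h False unfolding e by simp
  qed
qed (simp add: weight_def)

lemma psi_len: "n \<ge> 1 \<Longrightarrow> length (psi n z) = n"
  by (simp add: psi_def)

lemma psi_xor: "n \<ge> 1 \<Longrightarrow> XOR (psi n z) = Majority z"
  using tele[of z "n-1"] by (auto simp: psi_def XOR_def weight_snoc)

lemma weight_not: "weight (map Not x) = length x - weight x"
proof (induction x)
  case (Cons a x)
  then show ?case using length_filter_le[of id x] by (auto simp: weight_def Suc_diff_le)
qed (simp add: weight_def)

lemma psi_inj: assumes "odd n" shows "inj_on (psi n) (cube n)"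
proof
  fix x y assume x: "x \<in> cube n" and y: "y \<in> cube n" and e: "psi n x = psi n y"
  have lx: "length x = n" and ly: "length y = n" using x y by (auto simp: cube_def)
  from e have d: "map (\<lambda>i. x!i \<noteq> x!Suc i) [0..<n-1] = map (\<lambda>i. y!i \<noteq> y!Suc i) [0..<n-1]"
    and l: "(Majority x \<noteq> (x!0 \<noteq> x!(n-1))) = (Majority y \<noteq> (y!0 \<noteq> y!(n-1)))"
    by (auto simp: psi_def)
  have d2: "\<forall>i<n-1. (x!i \<noteq> x!Suc i) = (y!i \<noteq> y!Suc i)"
  proof (intro allI impI)
    fix i assume "i < n - 1"
    then show "(x!i \<noteq> x!Suc i) = (y!i \<noteq> y!Suc i)"
      using arg_cong[OF d, of "\<lambda>l. l!i"] by simp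
  qed
  have key: "\<And>i. i < n \<Longrightarrow> (x!i = y!i) = (x!0 = y!0)"
  proof -
    fix i show "i < n \<Longrightarrow> (x!i = y!i) = (x!0 = y!0)"
    proof (induction i)
      case (Suc i)
      then have "i < n - 1" by simp
      then have "(x!i \<noteq> x!Suc i) = (y!i \<noteq> y!Suc i)" using d2 by blast
      then show ?case using Suc by auto
    qed simp
  qed
  show "x = y"
  proof (cases "x!0 = y!0")
    case True
    show ?thesis
    proof (rule nth_equalityI)
      show "length x = length y" using lx ly by simp
      fix i assume "i < length x"
      then show "x!i = y!i" using key[of i] True lx by blast
    qed
  next
    case False
    have yx: "y = map Not x"
    proof (rule nth_equalityI)
      show "length y = length (map Not x)" using lx ly by simp
      fix i assume "i < length y"
      then show "y!i = map Not x ! i" using key[of i] False lx ly by auto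
    qed
    have w: "weight x \<le> n" using lx length_filter_le[of id x] by (simp add: weight_def)
    obtain k where k: "n = 2*k+1" using assms by (auto elim: oddE)
    have wy: "weight y = n - weight x" using yx weight_not[of x] lx by simp
    have "Majority y = (\<not> Majority x)"
      unfolding Majority_def wy lx ly using w k by arith
    moreover have "n - 1 < n" "0 < n" using k by auto
    moreover have "y!0 = (\<not> x!0)" "y!(n-1) = (\<not> x!(n-1))" using yx lx \<open>n - 1 < n\<close> \<open>0 < n\<close> by auto
    ultimately have False using l by (cases "Majority x") auto
    then show ?thesis ..
  qed
qed

lemma psi_bij: assumes "odd n" shows "bij_betw (psi n) (cube n) (cube n)"
proof -
  have n: "n \<ge> 1" using assms by (cases n) auto
  have s: "psi n ` cube n \<subseteq> cube n" using psi_len[OF n] by (auto simp: cube_def)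
  show ?thesis unfolding bij_betw_def
    using endo_inj_surj[OF finite_cube s psi_inj[OF assms]] psi_inj[OF assms] by simp
qed

lemma psi_lip: assumes n: "n \<ge> 1" and x: "x \<in> cube n" and y: "y \<in> cube n"
  shows "hdist (psi n x) (psi n y) \<le> 3 * hdist x y"
proof (cases "x = y")
  case True then show ?thesis by (simp add: hdist_def)
next
  case False
  have lx: "length x = n" and ly: "length y = n" using x y by (auto simp: cube_def)
  define D where "D = {i. i < n \<and> x!i \<noteq> y!i}"
  have hD: "hdist x y = card D" by (simp add: hdist_def D_def lx)
  have fD: "finite D" by (simp add: D_def)
  have "D \<noteq> {}" using False lx ly by (auto simp: D_def intro: nth_equalityI)
  then have D1: "card D \<ge> 1" using fD by (simp add: Suc_le_eq card_gt_0_iff)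
  define S where "S = {i. i < n - 1 \<and> (x!i \<noteq> x!Suc i) \<noteq> (y!i \<noteq> y!Suc i)}"
  have S: "S \<subseteq> D \<union> (\<lambda>j. j - 1) ` D"
  proof
    fix i assume "i \<in> S"
    then have i: "i < n - 1" and c: "(x!i \<noteq> x!Suc i) \<noteq> (y!i \<noteq> y!Suc i)" by (auto simp: S_def)
    show "i \<in> D \<union> (\<lambda>j. j - 1) ` D"
    proof (cases "x!i = y!i")
      case True
      then have "Suc i \<in> D" using i c by (auto simp: D_def)
      then show ?thesis by force
    next
      case False then show ?thesis using i by (auto simp: D_def)
    qed
  qed
  have cS: "card S \<le> 2 * card D"
  proof -
    have "card S \<le> card (D \<union> (\<lambda>j. j - 1) ` D)" using S fD by (intro card_mono) auto
    also have "\<dots> \<le> card D + card ((\<lambda>j. j - 1) ` D)" by (rule card_Un_le)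
    also have "\<dots> \<le> card D + card D" using card_image_le[OF fD] by simp
    finally show ?thesis by simp
  qed
  have T: "{i. i < length (psi n x) \<and> psi n x ! i \<noteq> psi n y ! i} \<subseteq> insert (n-1) S"
  proof
    fix i assume "i \<in> {i. i < length (psi n x) \<and> psi n x ! i \<noteq> psi n y ! i}"
    then have i: "i < n" and ne: "psi n x ! i \<noteq> psi n y ! i" using psi_len[OF n] by auto
    show "i \<in> insert (n-1) S"
    proof (cases "i < n - 1")
      case True
      then show ?thesis using ne by (simp add: psi_def nth_append S_def)
    qed (use i in auto)
  qed
  have H1: "hdist (psi n x) (psi n y) \<le> card (insert (n-1) S)"
    unfolding hdist_def by (rule card_mono) (use T in \<open>auto simp: S_def\<close>)
  have H2: "card (insert (n-1) S) \<le> card S + 1" by (simp add: S_def card_insert_if)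
  show ?thesis using H1 H2 cS D1 hD by linarith
qed

lemma part2: "\<exists>C::real. \<forall>n. odd n \<longrightarrow> (\<exists>psi. is_mapping n Majority XOR psi \<and>
            lipschitz_on_cube n C psi)"
proof (rule exI[of _ 3], intro allI impI)
  fix n :: nat assume o: "odd n"
  have n: "n \<ge> 1" using o by (cases n) auto
  show "\<exists>psi. is_mapping n Majority XOR psi \<and> lipschitz_on_cube n 3 psi"
  proof (intro exI conjI)
    show "is_mapping n Majority XOR (psi n)"
      unfolding is_mapping_def using psi_bij[OF o] psi_xor[OF n] by simp
    show "lipschitz_on_cube n 3 (psi n)"
      unfolding lipschitz_on_cube_def
    proof (intro ballI)
      fix x y assume "x \<in> cube n" "y \<in> cube n"
      then have "hdist (psi n x) (psi n y) \<le> 3 * hdist x y" by (rule psi_lip[OF n])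
      then show "real (hdist (psi n x) (psi n y)) \<le> 3 * real (hdist x y)" by linarith
    qed
  qed
qed
theorem theorem3:
  shows "(\<exists>c::real. c > 0 \<and> (\<forall>n phi. odd n \<longrightarrow> is_mapping n XOR Majority phi \<longrightarrow>
            avgStretch n phi \<ge> c * sqrt (real n)))
       \<and> (\<exists>C::real. \<forall>n. odd n \<longrightarrow> (\<exists>psi. is_mapping n Majority XOR psi \<and>
            lipschitz_on_cube n C psi))"
  using part1 part2 by blast

end
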